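(* There exists a fully-dynamic bin packing algorithm with constant worst-case recourse under general movement costs which, given items all of whose sizes satisfy $s_i\in[1/k,1/(k-1))$ for some integer $k\ge1$, packs them into bins of which all but one contain $k-1$ items and are hence at least $1-1/k$ full. (If all items have size $1/k$, the algorithm packs $k$ items in all bins but one.)
   Context: Fully-dynamic bin packing: items (size $s_i$, arbitrary movement cost $c_i\ge0$) are inserted and deleted over time; the algorithm maintains a packing of the current items into unit bins, paying $c_i$ each time it moves item $i$. Worst-case recourse $\gamma$ means that at each update the total movement cost incurred is at most $\gamma\cdot c_t$, where $c_t$ is the movement cost of the item inserted or deleted at that update. *)

theory Defs
  imports Complex_Main
begin

text \<open>Items carry an identifier (nat); an insertion reveals the item's size and
  movement cost. The state is a finite map from identifiers of currently
  present items to (size, cost).\<close>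

datatype upd = Ins nat real real | Del nat

type_synonym state = "nat \<Rightarrow> (real \<times> real) option"

fun step :: "state \<Rightarrow> upd \<Rightarrow> state" where
  "step S (Ins i s c) = S(i \<mapsto> (s, c))"
| "step S (Del i) = S(i := None)"

definition items :: "upd list \<Rightarrow> state" where
  "items us = foldl step Map.empty us"

fun upd_ok :: "state \<Rightarrow> upd \<Rightarrow> bool" where
  "upd_ok S (Ins i s c) = (S i = None \<and> 0 < s \<and> s \<le> 1 \<and> 0 \<le> c)"
| "upd_ok S (Del i) = (S i \<noteq> None)"

definition valid_seq :: "upd list \<Rightarrow> bool" where
  "valid_seq us = (\<forall>t < length us. upd_ok (items (take t us)) (us ! t))"

definition size_of :: "state \<Rightarrow> nat \<Rightarrow> real" where
  "size_of S i = fst (the (S i))"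

definition cost_of :: "state \<Rightarrow> nat \<Rightarrow> real" where
  "cost_of S i = snd (the (S i))"

fun upd_cost :: "state \<Rightarrow> upd \<Rightarrow> real" where
  "upd_cost S (Ins i s c) = c"
| "upd_cost S (Del i) = cost_of S i"

text \<open>A packing assigns each present item a bin label (nat).\<close>
definition bin_load :: "state \<Rightarrow> (nat \<Rightarrow> nat) \<Rightarrow> nat \<Rightarrow> real" where
  "bin_load S P b = (\<Sum>i \<in> {i \<in> dom S. P i = b}. size_of S i)"

definition feasible :: "state \<Rightarrow> (nat \<Rightarrow> nat) \<Rightarrow> bool" where
  "feasible S P = (\<forall>b. bin_load S P b \<le> 1)"

definition bin_count :: "state \<Rightarrow> (nat \<Rightarrow> nat) \<Rightarrow> nat \<Rightarrow> nat" where
  "bin_count S P b = card {i \<in> dom S. P i = b}"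

definition used_bins :: "state \<Rightarrow> (nat \<Rightarrow> nat) \<Rightarrow> nat set" where
  "used_bins S P = P ` dom S"

definition move_cost :: "state \<Rightarrow> state \<Rightarrow> (nat \<Rightarrow> nat) \<Rightarrow> (nat \<Rightarrow> nat) \<Rightarrow> real" where
  "move_cost S S' P P' = (\<Sum>i \<in> {i \<in> dom S \<inter> dom S'. P i \<noteq> P' i}. cost_of S' i)"

text \<open>Size class: s in [1/k, 1/(k-1)); for k = 1 the upper bound is +infinity.\<close>
definition in_class :: "nat \<Rightarrow> real \<Rightarrow> bool" where
  "in_class k s = (1 / real k \<le> s \<and> (k = 1 \<or> s < 1 / (real k - 1)))"

definition sizes_in :: "(real \<Rightarrow> bool) \<Rightarrow> upd list \<Rightarrow> bool" where
  "sizes_in Q us = (\<forall>u \<in> set us. \<forall>i s c. u = Ins i s c \<longrightarrow> Q s)"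

end

theory Submission
  imports Defs
begin


definition kap :: "real \<Rightarrow> real" where
  "kap c = (if c \<le> 0 then 0 else 2 powr (real_of_int \<lfloor>log 2 c\<rfloor> + 1))"

lemma kap_bounds:
  assumes "0 < c"
  shows "2 powr (real_of_int \<lfloor>log 2 c\<rfloor>) \<le> c \<and> c < 2 powr (real_of_int \<lfloor>log 2 c\<rfloor> + 1)"
  using floor_log_eq_powr_iff[of c 2 "\<lfloor>log 2 c\<rfloor>"] assms by simp

lemma kap_nonneg: "0 \<le> kap c"
  by (simp add: kap_def)

lemma kap_ge: "0 \<le> c \<Longrightarrow> c \<le> kap c"
  using kap_bounds[of c] by (auto simp: kap_def)

lemma kap_le: "0 \<le> c \<Longrightarrow> kap c \<le> 2 * c"
proof (cases "c \<le> 0")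
  case False
  then have "2 powr (real_of_int \<lfloor>log 2 c\<rfloor> + 1) = 2 * 2 powr (real_of_int \<lfloor>log 2 c\<rfloor>)"
    by (simp add: powr_add)
  then show ?thesis using kap_bounds[of c] False by (simp add: kap_def)
qed (simp add: kap_def)

lemma kap_geo:
  assumes "kap a < kap b"
  shows "2 * kap a \<le> kap b"
proof (cases "a \<le> 0")
  case True
  then show ?thesis using kap_nonneg[of b] by (simp add: kap_def)
next
  case a: False
  show ?thesis
  proof (cases "b \<le> 0")
    case True
    then show ?thesis using assms kap_nonneg[of a] by (simp add: kap_def)
  next
    case b: False
    let ?ea = "\<lfloor>log 2 a\<rfloor>" and ?eb = "\<lfloor>log 2 b\<rfloor>"
    have "2 powr (real_of_int ?ea + 1) < 2 powr (real_of_int ?eb + 1)"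
      using assms a b by (simp add: kap_def)
    then have "?ea < ?eb" by simp
    then have "real_of_int ?ea + 2 \<le> real_of_int ?eb + 1" by linarith
    then have "2 powr (real_of_int ?ea + 2) \<le> 2 powr (real_of_int ?eb + 1)" by simp
    moreover have "2 powr (real_of_int ?ea + 2) = 2 * 2 powr (real_of_int ?ea + 1)"
      by (simp add: powr_add)
    ultimately show ?thesis using a b by (simp add: kap_def)
  qed
qed

definition binof :: "(nat \<Rightarrow> nat) \<Rightarrow> nat set \<Rightarrow> nat \<Rightarrow> nat set" where
  "binof P I b = {i \<in> I. P i = b}"

definition srt :: "(nat \<Rightarrow> real) \<Rightarrow> nat set \<Rightarrow> (nat \<Rightarrow> nat) \<Rightarrow> bool" where
  "srt K I P = (\<forall>i\<in>I. \<forall>j\<in>I. P i < P j \<longrightarrow> K j \<le> K i)"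

definition Inv :: "nat \<Rightarrow> (nat \<Rightarrow> real) \<Rightarrow> (nat \<Rightarrow> real) \<Rightarrow> nat set \<Rightarrow> (nat \<Rightarrow> nat) \<Rightarrow> nat \<Rightarrow> bool" where
  "Inv L sz K I P n = (finite I \<and> (\<forall>i\<in>I. P i < n)
     \<and> (\<forall>b<n. (if Suc b = n then 1 else L) \<le> card (binof P I b))
     \<and> (\<forall>b<n. sum sz (binof P I b) \<le> 1) \<and> srt K I P)"

definition Items :: "nat \<Rightarrow> nat \<Rightarrow> (nat \<Rightarrow> real) \<Rightarrow> (nat \<Rightarrow> real) \<Rightarrow> (nat \<Rightarrow> real) \<Rightarrow> nat set \<Rightarrow> bool" where
  "Items k L sz cst K I = ((\<forall>i\<in>I. in_class k (sz i) \<and> 0 \<le> cst i \<and> cst i \<le> K i)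
      \<and> (L = k \<longrightarrow> (\<forall>i\<in>I. sz i = 1 / real k)))"

definition mc :: "(nat \<Rightarrow> real) \<Rightarrow> nat set \<Rightarrow> (nat \<Rightarrow> nat) \<Rightarrow> (nat \<Rightarrow> nat) \<Rightarrow> real" where
  "mc cst I P P' = sum cst {i \<in> I. P i \<noteq> P' i}"

definition clean :: "(nat \<Rightarrow> real) \<Rightarrow> nat set \<Rightarrow> (nat \<Rightarrow> nat) \<Rightarrow> nat \<Rightarrow> bool" where
  "clean K I P x = (\<forall>i\<in>I. \<forall>j\<in>I. P i = P j \<longrightarrow> K i < K x \<longrightarrow> K j < K x)"

lemma Items_mono: "Items k L sz cst K J \<Longrightarrow> I \<subseteq> J \<Longrightarrow> Items k L sz cst K I"
  unfolding Items_def by blast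

lemma sum_Un_nonneg:
  fixes f :: "nat \<Rightarrow> real"
  assumes "finite A" "finite B" "\<forall>i\<in>A \<union> B. 0 \<le> f i"
  shows "sum f (A \<union> B) \<le> sum f A + sum f B"
proof -
  have "0 \<le> sum f (A \<inter> B)" using assms by (intro sum_nonneg) auto
  then show ?thesis using sum_Un[OF assms(1,2), of f] by simp
qed

lemma mc_trans:
  assumes "finite I" "\<forall>i\<in>I. 0 \<le> cst i"
  shows "mc cst I P P2 \<le> mc cst I P P1 + mc cst I P1 P2"
proof -
  have "{i \<in> I. P i \<noteq> P2 i} \<subseteq> {i \<in> I. P i \<noteq> P1 i} \<union> {i \<in> I. P1 i \<noteq> P2 i}" by auto
  then have "mc cst I P P2 \<le> sum cst ({i \<in> I. P i \<noteq> P1 i} \<union> {i \<in> I. P1 i \<noteq> P2 i})"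
    unfolding mc_def using assms by (intro sum_mono2) auto
  also have "\<dots> \<le> mc cst I P P1 + mc cst I P1 P2"
    unfolding mc_def using assms by (intro sum_Un_nonneg) auto
  finally show ?thesis .
qed



lemma mc_step2:
  assumes fin: "finite I" "finite J2" and E: "E \<subseteq> I" and J: "J1 \<subseteq> J2"
    and agree: "\<forall>i\<in>I - E. i \<in> J1 \<and> P1 i = P i"
    and nn: "\<forall>i\<in>I \<union> J2. 0 \<le> cst i"
  shows "mc cst I P P3 \<le> sum cst E + mc cst J1 P1 P2 + mc cst J2 P2 P3"
proof -
  have fE: "finite E" using E fin finite_subset by blast
  have fJ1: "finite J1" using J fin finite_subset by blast
  have sub: "{i \<in> I. P i \<noteq> P3 i} \<subseteq> E \<union> {i \<in> J1. P1 i \<noteq> P2 i} \<union> {i \<in> J2. P2 i \<noteq> P3 i}"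
    using agree J by auto
  have "mc cst I P P3 \<le> sum cst (E \<union> {i \<in> J1. P1 i \<noteq> P2 i} \<union> {i \<in> J2. P2 i \<noteq> P3 i})"
    unfolding mc_def using fE fJ1 fin nn E J by (intro sum_mono2[OF _ sub]) auto
  also have "\<dots> \<le> sum cst (E \<union> {i \<in> J1. P1 i \<noteq> P2 i}) + sum cst {i \<in> J2. P2 i \<noteq> P3 i}"
    using fE fJ1 fin nn E J by (intro sum_Un_nonneg) auto
  also have "sum cst (E \<union> {i \<in> J1. P1 i \<noteq> P2 i}) \<le> sum cst E + sum cst {i \<in> J1. P1 i \<noteq> P2 i}"
    using fE fJ1 fin nn E J by (intro sum_Un_nonneg) auto
  finally show ?thesis unfolding mc_def by simp
qed

lemma mc_same: "mc cst I P P = 0"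
  by (simp add: mc_def)

lemma mc_upd_new: "x \<notin> I \<Longrightarrow> mc cst I P (P(x := b)) = 0"
  unfolding mc_def by (rule sum.neutral) auto

lemma srt_mono: "srt K I P \<Longrightarrow> J \<subseteq> I \<Longrightarrow> srt K J P"
  unfolding srt_def by blast

lemma srt_ins:
  assumes "srt K J P" "x \<notin> J"
    "\<forall>i\<in>J. P i < b \<longrightarrow> K x \<le> K i" "\<forall>i\<in>J. b < P i \<longrightarrow> K i \<le> K x"
  shows "srt K (insert x J) (P(x := b))"
  using assms unfolding srt_def by auto

lemma binof_fin: "finite I \<Longrightarrow> finite (binof P I b)"
  unfolding binof_def by simp

locale alg =
  fixes k L :: nat and sz cst K :: "nat \<Rightarrow> real"
  assumes k1: "1 \<le> k" and Lk: "L = k \<or> (L = k - 1 \<and> 2 \<le> k)"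
    and geo: "\<And>a b. K a < K b \<Longrightarrow> 2 * K a \<le> K b"
begin

lemma L1: "1 \<le> L" using k1 Lk by auto

lemma ok_le:
  assumes "Items k L sz cst K J" "B \<subseteq> J" "finite B" "card B \<le> k - 1"
  shows "sum sz B \<le> 1"
proof (cases "k = 1")
  case True
  then have "B = {}" using assms by simp
  then show ?thesis by simp
next
  case False
  then have k2: "2 \<le> k" using k1 by simp
  have "\<forall>i\<in>B. sz i \<le> 1 / (real k - 1)"
    using assms(1,2) False unfolding Items_def in_class_def by fastforce
  then have "sum sz B \<le> real (card B) * (1 / (real k - 1))"
    using sum_bounded_above[of B sz "1 / (real k - 1)"] by simp
  also have "\<dots> \<le> (real k - 1) * (1 / (real k - 1))"
    using assms(4) k2 by (intro mult_right_mono) auto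
  also have "\<dots> = 1" using k2 by simp
  finally show ?thesis .
qed

lemma ok_small:
  assumes "finite B" "card B \<le> k" "\<forall>i\<in>B. sz i = 1 / real k"
  shows "sum sz B \<le> 1"
proof -
  have "sum sz B = real (card B) / real k" using assms by simp
  also have "\<dots> \<le> 1" using assms k1 by simp
  finally show ?thesis .
qed

lemma okL:
  assumes "Items k L sz cst K J" "B \<subseteq> J" "finite B" "card B \<le> L"
  shows "sum sz B \<le> 1"
proof (cases "L = k")
  case True
  then show ?thesis using assms ok_small unfolding Items_def by blast
next
  case False
  then show ?thesis using assms Lk ok_le by auto
qed

lemma ok_full:
  assumes "Items k L sz cst K J" "B \<subseteq> J" "finite B" "sum sz B \<le> 1" "k \<le> card B"
  shows "card B = k \<and> (\<forall>i\<in>B. sz i = 1 / real k)"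
proof -
  have ge: "\<forall>i\<in>B. 1 / real k \<le> sz i"
    using assms(1,2) unfolding Items_def in_class_def by blast
  have s1: "real (card B) / real k \<le> sum sz B"
    using sum_mono[of B "\<lambda>_. 1 / real k" sz] ge by simp
  have "card B \<le> k"
  proof (rule ccontr)
    assume "\<not> card B \<le> k"
    then have "real k + 1 \<le> real (card B)" by simp
    then have "(real k + 1) / real k \<le> real (card B) / real k"
      using k1 by (intro divide_right_mono) auto
    moreover have "1 < (real k + 1) / real k" using k1 by simp
    ultimately show False using s1 assms(4) by linarith
  qed
  then have c: "card B = k" using assms(5) by simp
  have "\<forall>i\<in>B. sz i = 1 / real k"
  proof (rule ccontr)
    assume "\<not> (\<forall>i\<in>B. sz i = 1 / real k)"
    then obtain i where "i \<in> B" "1 / real k < sz i" using ge by force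
    then have "sum (\<lambda>_. 1 / real k) B < sum sz B"
      using ge assms(3) by (intro sum_strict_mono_ex1) auto
    then show False using c assms(4) k1 by simp
  qed
  then show ?thesis using c by simp
qed

lemma notok_card:
  assumes "Items k L sz cst K J" "B \<subseteq> J" "finite B" "\<not> sum sz B \<le> 1"
  shows "L < card B"
  using okL[OF assms(1-3)] assms(4) by fastforce

end



definition Dfc :: "nat \<Rightarrow> (nat \<Rightarrow> real) \<Rightarrow> (nat \<Rightarrow> real) \<Rightarrow> nat set \<Rightarrow> (nat \<Rightarrow> nat) \<Rightarrow> nat \<Rightarrow> nat \<Rightarrow> bool" where
  "Dfc L sz K I P n q = (finite I \<and> (\<forall>i\<in>I. P i < n) \<and> Suc q < n \<and> card (binof P I q) + 1 = L
     \<and> (\<forall>b<n. b \<noteq> q \<longrightarrow> (if Suc b = n then 1 else L) \<le> card (binof P I b))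
     \<and> (\<forall>b<n. sum sz (binof P I b) \<le> 1) \<and> srt K I P)"

lemma binof_move:
  "x \<in> I \<Longrightarrow> binof (P(x := q)) I b = (if b = q then insert x (binof P I b) else binof P I b - {x})"
  unfolding binof_def by auto

lemma binof_diff: "binof P (I - E) b = binof P I b - E"
  unfolding binof_def by auto

context alg
begin

lemma sz_pos: "Items k L sz cst K J \<Longrightarrow> i \<in> J \<Longrightarrow> 0 < sz i"
proof -
  assume "Items k L sz cst K J" "i \<in> J"
  then have "1 / real k \<le> sz i" unfolding Items_def in_class_def by blast
  moreover have "0 < 1 / real k" using k1 by simp
  ultimately show "0 < sz i" by linarith
qed

lemma load_subset:
  assumes "Items k L sz cst K J" "A \<subseteq> B" "B \<subseteq> J" "finite B"
  shows "sum sz A \<le> sum sz B"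
proof -
  have "\<forall>i\<in>B. 0 \<le> sz i" using assms sz_pos by (meson less_imp_le subsetD)
  then show ?thesis using assms by (intro sum_mono2) auto
qed

lemma repair:
  "n - q = d \<Longrightarrow> Dfc L sz K I P n q \<Longrightarrow> Items k L sz cst K I \<Longrightarrow> (\<forall>i\<in>I. q < P i \<longrightarrow> K i \<le> M)
   \<Longrightarrow> \<exists>P' n'. Inv L sz K I P' n' \<and> mc cst I P P' \<le> 2 * M"
proof (induction d arbitrary: P q M rule: less_induct)
  case (less d)
  note D = less.prems(2)[unfolded Dfc_def]
  have finI: "finite I" using D by blast
  have Dcnt: "\<And>b. b < n \<Longrightarrow> b \<noteq> q \<Longrightarrow> (if Suc b = n then 1 else L) \<le> card (binof P I b)"
    using D by blast
  have Dload: "\<And>b. b < n \<Longrightarrow> sum sz (binof P I b) \<le> 1" using D by blast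
  have Dsrt: "srt K I P" using D by blast
  have Drng: "\<forall>i\<in>I. P i < n" using D by blast
  have Dq: "Suc q < n" "card (binof P I q) + 1 = L" using D by blast+
  define A where "A = {i \<in> I. q < P i}"
  have finA: "finite A" using finI by (simp add: A_def)
  have nn1: "n - 1 < n" "n - 1 \<noteq> q" "Suc (n - 1) = n" using Dq by auto
  then have "(if Suc (n - 1) = n then 1 else L) \<le> card (binof P I (n - 1))" using Dcnt by blast
  then have "1 \<le> card (binof P I (n - 1))" using nn1 by simp
  then obtain i0 where "i0 \<in> binof P I (n - 1)" by (metis card.empty ex_in_conv not_one_le_zero)
  then have i0: "i0 \<in> A" using Dq unfolding A_def binof_def by auto
  define Mx where "Mx = Max (K ` A)"
  have Mx: "\<forall>i\<in>A. K i \<le> Mx" using finA by (simp add: Mx_def)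
  have "Mx \<in> K ` A" using finA i0 unfolding Mx_def by (intro Max_in) auto
  define B where "B = P ` {i \<in> A. K i = Mx}"
  have finB: "finite B" using finA by (simp add: B_def)
  have neB: "B \<noteq> {}" using \<open>Mx \<in> K ` A\<close> by (auto simp: B_def)
  define bs where "bs = Max B"
  have "bs \<in> B" using finB neB by (simp add: bs_def)
  then obtain x where x: "x \<in> A" "K x = Mx" "P x = bs" by (auto simp: B_def)
  have hmax: "\<forall>i\<in>A. K i \<le> K x" using Mx x by simp
  have hlast: "\<forall>i\<in>A. bs < P i \<longrightarrow> K i < K x"
  proof (intro ballI impI)
    fix i assume "i \<in> A" "bs < P i"
    have "K i \<noteq> Mx"
    proof
      assume "K i = Mx"
      then have "P i \<in> B" using \<open>i \<in> A\<close> by (auto simp: B_def)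
      then have "P i \<le> bs" using finB by (simp add: bs_def)
      then show False using \<open>bs < P i\<close> by simp
    qed
    then show "K i < K x" using Mx \<open>i \<in> A\<close> x by force
  qed
  have xI: "x \<in> I" and qbs: "q < bs" using x by (auto simp: A_def)
  have bsn: "bs < n" using Drng xI x by auto
  have KxM: "K x \<le> M" using less.prems(4) xI qbs x by auto
  have cx: "0 \<le> cst x" "cst x \<le> K x" using less.prems(3) xI unfolding Items_def by auto
  define P1 where "P1 = P(x := q)"
  have bin1: "\<And>b. binof P1 I b = (if b = q then insert x (binof P I b) else binof P I b - {x})"
    unfolding P1_def using binof_move[OF xI] by simp
  have xnq: "x \<notin> binof P I q" using x qbs by (simp add: binof_def)
  have xbs: "x \<in> binof P I bs" using x xI by (simp add: binof_def)
  have finbin: "\<And>b. finite (binof P I b)" using finI binof_fin by blast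
  have cq: "card (binof P1 I q) = L" using bin1[of q] xnq Dq finbin by simp
  have cbs: "card (binof P1 I bs) = card (binof P I bs) - 1" using bin1[of bs] qbs xbs finbin by simp
  have coth: "\<And>b. b \<noteq> q \<Longrightarrow> b \<noteq> bs \<Longrightarrow> card (binof P1 I b) = card (binof P I b)"
  proof -
    fix b assume "b \<noteq> q" "b \<noteq> bs"
    then have "x \<notin> binof P I b" using x by (simp add: binof_def)
    then show "card (binof P1 I b) = card (binof P I b)" using bin1[of b] \<open>b \<noteq> q\<close> by simp
  qed
  have load1: "\<forall>b<n. sum sz (binof P1 I b) \<le> 1"
  proof (intro allI impI)
    fix b assume "b < n"
    show "sum sz (binof P1 I b) \<le> 1"
    proof (cases "b = q")
      case True
      then show ?thesis using cq by (intro okL[OF less.prems(3)]) (auto simp: binof_def finI)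
    next
      case False
      then have "sum sz (binof P1 I b) \<le> sum sz (binof P I b)"
        using bin1[of b] less.prems(3) finbin by (intro load_subset[of I]) (auto simp: binof_def)
      then show ?thesis using Dload[of b] \<open>b < n\<close> by simp
    qed
  qed
  have srt1: "srt K I P1"
    unfolding srt_def
  proof (intro ballI impI)
    fix i j assume ij: "i \<in> I" "j \<in> I" "P1 i < P1 j"
    show "K j \<le> K i"
    proof (cases "i = x")
      case True
      then have "j \<noteq> x" using ij by (auto simp: P1_def)
      then have "j \<in> A" using ij True by (auto simp: P1_def A_def)
      then show ?thesis using hmax True by simp
    next
      case False
      show ?thesis
      proof (cases "j = x")
        case True
        then have "P i < q" using ij False by (auto simp: P1_def)
        then have "P i < P x" using qbs x by simp
        then show ?thesis using Dsrt ij(1) xI True unfolding srt_def by blast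
      next
        case False
        then show ?thesis using \<open>i \<noteq> x\<close> ij D unfolding srt_def P1_def by auto
      qed
    qed
  qed
  have mc1: "mc cst I P P1 = cst x"
  proof -
    have "{i \<in> I. P i \<noteq> P1 i} = {x}" using xI x qbs by (auto simp: P1_def)
    then show ?thesis by (simp add: mc_def)
  qed
  have rng1: "\<forall>i\<in>I. P1 i < n" using Drng bsn qbs Dq by (auto simp: P1_def)
  show ?case
  proof (cases "Suc bs = n")
    case last: True
    show ?thesis
    proof (cases "card (binof P I bs) = 1")
      case True
      have "card (binof P1 I bs) = 0" using cbs True by simp
      then have emp: "binof P1 I bs = {}" using card_0_eq[OF binof_fin[OF finI]] by blast
      have "Inv L sz K I P1 (n - 1)"
        unfolding Inv_def
      proof (intro conjI allI impI)
        show "finite I" by (rule finI)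
        fix b assume "b < n - 1"
        then show "sum sz (binof P1 I b) \<le> 1" using load1 by simp
      next
        show "\<forall>i\<in>I. P1 i < n - 1"
        proof
          fix i assume "i \<in> I"
          then have "P1 i < n" "P1 i \<noteq> bs" using rng1 emp by (auto simp: binof_def)
          then show "P1 i < n - 1" using last by simp
        qed
      next
        fix b assume b: "b < n - 1"
        show "(if Suc b = n - 1 then 1 else L) \<le> card (binof P1 I b)"
        proof (cases "b = q")
          case True
          then show ?thesis using cq L1 by simp
        next
          case False
          have "b \<noteq> bs" using b last by simp
          then have "L \<le> card (binof P1 I b)" using coth[OF False] Dcnt[of b] b False last by simp
          then show ?thesis using L1 by simp
        qed
      next
        show "srt K I P1" by (rule srt1)
      qed
      then show ?thesis using mc1 cx KxM by (intro exI[of _ P1] exI[of _ "n - 1"]) simp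
    next
      case False
      have "1 \<le> card (binof P I bs)" using Dcnt[of bs] bsn last qbs by simp
      then have c2: "1 \<le> card (binof P1 I bs)" using cbs False by simp
      have "Inv L sz K I P1 n"
        unfolding Inv_def
      proof (intro conjI allI impI)
        fix b assume b: "b < n"
        show "(if Suc b = n then 1 else L) \<le> card (binof P1 I b)"
        proof (cases "b = q")
          case True then show ?thesis using cq L1 by simp
        next
          case bq: False
          show ?thesis
          proof (cases "b = bs")
            case True then show ?thesis using c2 last by simp
          next
            case False then show ?thesis using coth[OF bq False] Dcnt[of b] b bq by simp
          qed
        qed
      qed (use finI rng1 load1 srt1 in auto)
      then show ?thesis using mc1 cx KxM by (intro exI[of _ P1] exI[of _ n]) simp
    qed
  next
    case nl: False
    then have bsn1: "Suc bs < n" using bsn by simp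
    have cbs0: "L \<le> card (binof P I bs)" using Dcnt[of bs] bsn nl qbs by simp
    show ?thesis
    proof (cases "L \<le> card (binof P1 I bs)")
      case True
      have "Inv L sz K I P1 n"
        unfolding Inv_def
      proof (intro conjI allI impI)
        fix b assume b: "b < n"
        show "(if Suc b = n then 1 else L) \<le> card (binof P1 I b)"
        proof (cases "b = q")
          case True then show ?thesis using cq L1 by simp
        next
          case bq: False
          show ?thesis
          proof (cases "b = bs")
            case True then show ?thesis using \<open>L \<le> card (binof P1 I bs)\<close> nl L1 by simp
          next
            case False then show ?thesis using coth[OF bq False] Dcnt[of b] b bq by simp
          qed
        qed
      qed (use finI rng1 load1 srt1 in auto)
      then show ?thesis using mc1 cx KxM by (intro exI[of _ P1] exI[of _ n]) simp
    next
      case False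
      have dfc: "Dfc L sz K I P1 n bs"
        unfolding Dfc_def
      proof (intro conjI allI impI)
        show "card (binof P1 I bs) + 1 = L" using False cbs cbs0 by simp
        fix b assume b: "b < n" "b \<noteq> bs"
        show "(if Suc b = n then 1 else L) \<le> card (binof P1 I b)"
        proof (cases "b = q")
          case True then show ?thesis using cq L1 by simp
        next
          case bq: False
          then show ?thesis using coth[OF bq b(2)] Dcnt[of b] b bq by simp
        qed
      qed (use finI rng1 load1 srt1 bsn1 in auto)
      have "n - bs < d" using less.prems(1) qbs bsn by simp
      moreover have "\<forall>i\<in>I. bs < P1 i \<longrightarrow> K i \<le> K x / 2"
      proof (intro ballI impI)
        fix i assume "i \<in> I" "bs < P1 i"
        then have "i \<noteq> x" using qbs by (auto simp: P1_def)
        then have "bs < P i" "i \<in> A" using \<open>bs < P1 i\<close> \<open>i \<in> I\<close> qbs by (auto simp: P1_def A_def)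
        then have "K i < K x" using hlast by simp
        then show "K i \<le> K x / 2" using geo by fastforce
      qed
      ultimately obtain P2 n2 where P2: "Inv L sz K I P2 n2" "mc cst I P1 P2 \<le> 2 * (K x / 2)"
        using less.IH[OF _ refl dfc less.prems(3)] by blast
      have nn: "\<forall>i\<in>I. 0 \<le> cst i" using less.prems(3) unfolding Items_def by auto
      have "mc cst I P P2 \<le> mc cst I P P1 + mc cst I P1 P2" by (rule mc_trans[OF finI nn])
      then have "mc cst I P P2 \<le> 2 * M" using mc1 P2(2) cx KxM by simp
      then show ?thesis using P2(1) by blast
    qed
  qed
qed

end



context alg
begin

lemma del:
  assumes inv: "Inv L sz K I P n" and its: "Items k L sz cst K I" and y: "y \<in> I"
  shows "\<exists>P' n'. Inv L sz K (I - {y}) P' n' \<and> mc cst (I - {y}) P P' \<le> 2 * K y"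
proof -
  have finI: "finite I" and rng: "\<forall>i\<in>I. P i < n"
    and cnt: "\<And>b. b < n \<Longrightarrow> (if Suc b = n then 1 else L) \<le> card (binof P I b)"
    and load: "\<And>b. b < n \<Longrightarrow> sum sz (binof P I b) \<le> 1" and st: "srt K I P"
    using inv unfolding Inv_def by blast+
  define J where "J = I - {y}"
  have finJ: "finite J" using finI by (simp add: J_def)
  have binJ: "\<And>c. binof P J c = binof P I c - {y}" unfolding J_def by (rule binof_diff)
  have finbin: "\<And>c. finite (binof P I c)" using finI binof_fin by blast
  have Ky: "0 \<le> K y" using its y unfolding Items_def by force
  have loadJ: "\<And>b. b < n \<Longrightarrow> sum sz (binof P J b) \<le> 1"
  proof -
    fix b assume "b < n"
    have "sum sz (binof P J b) \<le> sum sz (binof P I b)"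
      using binJ its finbin by (intro load_subset[of I]) (auto simp: binof_def)
    then show "sum sz (binof P J b) \<le> 1" using load[OF \<open>b < n\<close>] by simp
  qed
  have stJ: "srt K J P" using st by (rule srt_mono) (auto simp: J_def)
  define b where "b = P y"
  have bn: "b < n" using rng y by (simp add: b_def)
  have yb: "y \<in> binof P I b" using y by (simp add: binof_def b_def)
  have coth: "\<And>c. c \<noteq> b \<Longrightarrow> binof P J c = binof P I c"
    using binJ by (auto simp: binof_def b_def)
  have cb: "card (binof P J b) = card (binof P I b) - 1" using binJ yb finbin by simp
  show ?thesis
  proof (cases "Suc b = n")
    case last: True
    show ?thesis
    proof (cases "binof P J b = {}")
      case True
      have "Inv L sz K J P (n - 1)"
        unfolding Inv_def
      proof (intro conjI allI impI)
        show "\<forall>i\<in>J. P i < n - 1"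
        proof
          fix i assume "i \<in> J"
          then have "P i < n" "P i \<noteq> b" using rng True by (auto simp: binof_def J_def)
          then show "P i < n - 1" using last by simp
        qed
      next
        fix c assume c: "c < n - 1"
        then have "c \<noteq> b" "c < n" "Suc c \<noteq> n" using last by auto
        then have "L \<le> card (binof P J c)" using cnt[of c] coth[of c] by simp
        then show "(if Suc c = n - 1 then 1 else L) \<le> card (binof P J c)" using L1 by simp
      next
        fix c assume "c < n - 1"
        then show "sum sz (binof P J c) \<le> 1" using loadJ by simp
      qed (use finJ stJ in auto)
      then show ?thesis using Ky by (intro exI[of _ P] exI[of _ "n - 1"]) (simp add: mc_same J_def)
    next
      case False
      have "Inv L sz K J P n"
        unfolding Inv_def
      proof (intro conjI allI impI)
        fix c assume c: "c < n"
        show "(if Suc c = n then 1 else L) \<le> card (binof P J c)"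
        proof (cases "c = b")
          case True
          then show ?thesis using False last finJ binof_fin
            by (simp add: card_gt_0_iff Suc_le_eq)
        next
          case False
          then show ?thesis using cnt[OF c] coth[OF False] by simp
        qed
      qed (use finJ stJ loadJ rng in \<open>auto simp: J_def\<close>)
      then show ?thesis using Ky by (intro exI[of _ P] exI[of _ n]) (simp add: mc_same J_def)
    qed
  next
    case nl: False
    have cb0: "L \<le> card (binof P I b)" using cnt[OF bn] nl by simp
    show ?thesis
    proof (cases "L \<le> card (binof P J b)")
      case True
      have "Inv L sz K J P n"
        unfolding Inv_def
      proof (intro conjI allI impI)
        fix c assume c: "c < n"
        show "(if Suc c = n then 1 else L) \<le> card (binof P J c)"
        proof (cases "c = b")
          case True
          then show ?thesis using \<open>L \<le> card (binof P J b)\<close> nl by simp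
        next
          case False
          then show ?thesis using cnt[OF c] coth[OF False] by simp
        qed
      qed (use finJ stJ loadJ rng in \<open>auto simp: J_def\<close>)
      then show ?thesis using Ky by (intro exI[of _ P] exI[of _ n]) (simp add: mc_same J_def)
    next
      case False
      have dfc: "Dfc L sz K J P n b"
        unfolding Dfc_def
      proof (intro conjI allI impI)
        show "card (binof P J b) + 1 = L" using False cb cb0 by simp
        show "Suc b < n" using bn nl by simp
        fix c assume c: "c < n" "c \<noteq> b"
        then show "(if Suc c = n then 1 else L) \<le> card (binof P J c)" using cnt[of c] coth[of c] by simp
      qed (use finJ stJ loadJ rng in \<open>auto simp: J_def\<close>)
      have "\<forall>i\<in>J. b < P i \<longrightarrow> K i \<le> K y"
        using st y unfolding srt_def J_def b_def by auto
      then have "\<exists>P' n'. Inv L sz K J P' n' \<and> mc cst J P P' \<le> 2 * K y"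
        using repair[OF refl dfc Items_mono[OF its]] by (auto simp: J_def)
      then show ?thesis by (simp add: J_def)
    qed
  qed
qed

end



lemma binof_put:
  assumes "x \<notin> I" "E \<subseteq> binof P I f"
  shows "binof (P(x := f)) (insert x (I - E)) c = (if c = f then insert x (binof P I f - E) else binof P I c)"
  using assms unfolding binof_def by auto

lemma meas_lt:
  assumes "finite I" "A \<subseteq> {i \<in> I. K i < (Kx::real)} - {w}" "w \<in> I" "K w < Kx"
  shows "card A < card {i \<in> I. K i < Kx}"
proof -
  have "card A \<le> card ({i \<in> I. K i < Kx} - {w})" using assms by (intro card_mono) auto
  also have "\<dots> < card {i \<in> I. K i < Kx}" using assms by (intro card_Diff1_less) auto
  finally show ?thesis .
qed

context alg
begin

lemma Inv_put:
  assumes inv: "Inv L sz K I P n" and x: "x \<notin> I" and E: "E \<subseteq> binof P I f" and f: "f < n"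
    and c: "(if Suc f = n then 1 else L) \<le> card (insert x (binof P I f - E))"
    and l: "sum sz (insert x (binof P I f - E)) \<le> 1"
    and s1: "\<forall>i\<in>I. P i < f \<longrightarrow> K x \<le> K i" and s2: "\<forall>i\<in>I. f < P i \<longrightarrow> K i \<le> K x"
  shows "Inv L sz K (insert x (I - E)) (P(x := f)) n"
proof -
  have finI: "finite I" and rng: "\<forall>i\<in>I. P i < n"
    and cnt: "\<And>b. b < n \<Longrightarrow> (if Suc b = n then 1 else L) \<le> card (binof P I b)"
    and load: "\<And>b. b < n \<Longrightarrow> sum sz (binof P I b) \<le> 1" and st: "srt K I P"
    using inv unfolding Inv_def by blast+
  have EI: "E \<subseteq> I" using E by (auto simp: binof_def)
  show ?thesis
    unfolding Inv_def
  proof (intro conjI allI impI)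
    show "finite (insert x (I - E))" using finI by simp
    show "\<forall>i\<in>insert x (I - E). (P(x := f)) i < n" using rng f by auto
    fix b assume b: "b < n"
    show "(if Suc b = n then 1 else L) \<le> card (binof (P(x := f)) (insert x (I - E)) b)"
      using binof_put[OF x E, of b] c cnt[OF b] by (cases "b = f") auto
    show "sum sz (binof (P(x := f)) (insert x (I - E)) b) \<le> 1"
      using binof_put[OF x E, of b] l load[OF b] by (cases "b = f") auto
  next
    have "srt K (insert x (I - E)) (P(x := f))"
      using srt_mono[OF st, of "I - E"] x s1 s2 by (intro srt_ins) auto
    then show "srt K (insert x (I - E)) (P(x := f))" .
  qed
qed

lemma Inv_remove:
  assumes inv: "Inv L sz K I P n" and its: "Items k L sz cst K I" and w: "w \<in> I"
    and c: "(if Suc (P w) = n then 1 else L) \<le> card (binof P I (P w)) - 1"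
  shows "Inv L sz K (I - {w}) P n"
proof -
  have finI: "finite I" and rng: "\<forall>i\<in>I. P i < n"
    and cnt: "\<And>b. b < n \<Longrightarrow> (if Suc b = n then 1 else L) \<le> card (binof P I b)"
    and load: "\<And>b. b < n \<Longrightarrow> sum sz (binof P I b) \<le> 1" and st: "srt K I P"
    using inv unfolding Inv_def by blast+
  have finbin: "\<And>c. finite (binof P I c)" using finI binof_fin by blast
  show ?thesis
    unfolding Inv_def
  proof (intro conjI allI impI)
    show "finite (I - {w})" using finI by simp
    show "\<forall>i\<in>I - {w}. P i < n" using rng by auto
    fix b assume b: "b < n"
    show "(if Suc b = n then 1 else L) \<le> card (binof P (I - {w}) b)"
    proof (cases "b = P w")
      case True
      then have "binof P (I - {w}) b = binof P I b - {w}" by (simp add: binof_diff)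
      moreover have "w \<in> binof P I b" using True w by (simp add: binof_def)
      ultimately show ?thesis using c True finbin by simp
    next
      case False
      then have "binof P (I - {w}) b = binof P I b" by (auto simp: binof_def)
      then show ?thesis using cnt[OF b] by simp
    qed
    have "sum sz (binof P (I - {w}) b) \<le> sum sz (binof P I b)"
      using its finbin by (intro load_subset[of I]) (auto simp: binof_def)
    then show "sum sz (binof P (I - {w}) b) \<le> 1" using load[OF b] by simp
  next
    show "srt K (I - {w}) P" using st by (rule srt_mono) auto
  qed
qed

lemma insG:
  assumes inv: "Inv L sz K I P n" and its: "Items k L sz cst K (insert x I)" and x: "x \<notin> I"
    and all: "\<forall>i\<in>I. K x \<le> K i"
  shows "\<exists>P' n'. Inv L sz K (insert x I) P' n' \<and> mc cst I P P' = 0"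
proof -
  have finI: "finite I" and rng: "\<forall>i\<in>I. P i < n"
    and cnt: "\<And>b. b < n \<Longrightarrow> (if Suc b = n then 1 else L) \<le> card (binof P I b)"
    and load: "\<And>b. b < n \<Longrightarrow> sum sz (binof P I b) \<le> 1" and st: "srt K I P"
    using inv unfolding Inv_def by blast+
  have finbin: "\<And>c. finite (binof P I c)" using finI binof_fin by blast
  have binx: "\<And>b c. binof (P(x := b)) (insert x I) c = (if c = b then insert x (binof P I c) else binof P I c)"
    using x unfolding binof_def by auto
  have single: "sum sz {x} \<le> 1" using its L1 by (intro okL[of "insert x I"]) auto
  show ?thesis
  proof (cases "n = 0")
    case True
    then have I0: "I = {}" using rng by auto
    have "Inv L sz K (insert x I) (P(x := 0)) 1"
      unfolding Inv_def using I0 single by (auto simp: binof_def srt_def)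
    then show ?thesis using mc_upd_new[OF x] by blast
  next
    case False
    define D where "D = n - 1"
    have D: "D < n" "Suc D = n" using False by (auto simp: D_def)
    show ?thesis
    proof (cases "sum sz (insert x (binof P I D)) \<le> 1")
      case True
      have "1 \<le> card (insert x (binof P I D))" using finbin[of D] by (simp add: Suc_le_eq card_gt_0_iff)
      then have "Inv L sz K (insert x (I - {})) (P(x := D)) n"
        using True all rng D by (intro Inv_put[OF inv x]) (auto simp: finbin cnt)
      then show ?thesis using mc_upd_new[OF x] by auto
    next
      case notok: False
      have "L < card (insert x (binof P I D))"
        using notok finbin by (intro notok_card[OF its]) (auto simp: binof_def)
      then have cD: "L \<le> card (binof P I D)" using finbin x by (simp add: binof_def)
      have "Inv L sz K (insert x I) (P(x := n)) (Suc n)"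
        unfolding Inv_def
      proof (intro conjI allI impI)
        show "finite (insert x I)" using finI by simp
        show "\<forall>i\<in>insert x I. (P(x := n)) i < Suc n" using rng by auto
        fix b assume b: "b < Suc n"
        show "(if Suc b = Suc n then 1 else L) \<le> card (binof (P(x := n)) (insert x I) b)"
        proof (cases "b = n")
          case True
          have "binof P I n = {}" using rng by (auto simp: binof_def)
          then show ?thesis using True binx[of n n] by simp
        next
          case False
          then have "b < n" using b by simp
          then show ?thesis using False binx[of n b] cnt[of b] cD D by (cases "b = D") auto
        qed
        show "sum sz (binof (P(x := n)) (insert x I) b) \<le> 1"
        proof (cases "b = n")
          case True
          have "binof P I n = {}" using rng by (auto simp: binof_def)
          then show ?thesis using True binx[of n n] single by simp
        next
          case False
          then show ?thesis using b binx[of n b] load[of b] by simp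
        qed
      next
        show "srt K (insert x I) (P(x := n))" using st x all rng by (intro srt_ins) auto
      qed
      then show ?thesis using mc_upd_new[OF x] by blast
    qed
  qed
qed

end



definition InsPost :: "nat \<Rightarrow> nat \<Rightarrow> (nat \<Rightarrow> real) \<Rightarrow> (nat \<Rightarrow> real) \<Rightarrow> (nat \<Rightarrow> real) \<Rightarrow> nat set \<Rightarrow> (nat \<Rightarrow> nat) \<Rightarrow> nat \<Rightarrow> bool" where
  "InsPost k L sz cst K I P x = (\<exists>P' n'. Inv L sz K (insert x I) P' n' \<and> mc cst I P P' \<le> 9 * K x
     \<and> (sz x = 1 / real k \<longrightarrow> mc cst I P P' \<le> 5 * K x) \<and> (clean K I P x \<longrightarrow> mc cst I P P' \<le> 6 * K x))"

context alg
begin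

lemma ins:
  "card {i \<in> I. K i < K x} = m \<Longrightarrow> Inv L sz K I P n \<Longrightarrow> Items k L sz cst K (insert x I) \<Longrightarrow> x \<notin> I
   \<Longrightarrow> InsPost k L sz cst K I P x"
proof (induction m arbitrary: x I P n rule: less_induct)
  case (less m)
  note inv = less.prems(2) and its = less.prems(3) and x = less.prems(4)
  have finI: "finite I" and rng: "\<forall>i\<in>I. P i < n"
    and cnt: "\<And>b. b < n \<Longrightarrow> (if Suc b = n then 1 else L) \<le> card (binof P I b)"
    and load: "\<And>b. b < n \<Longrightarrow> sum sz (binof P I b) \<le> 1" and st: "srt K I P"
    using inv unfolding Inv_def by blast+
  have finbin: "\<And>c. finite (binof P I c)" using finI binof_fin by blast
  have cK: "\<And>i. i \<in> insert x I \<Longrightarrow> 0 \<le> cst i \<and> cst i \<le> K i" using its unfolding Items_def by blast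
  have Kx0: "0 \<le> K x" using cK[of x] by auto
  have nn: "\<forall>i\<in>insert x I. 0 \<le> cst i" using cK by blast
  show ?case
  proof (cases "\<exists>i\<in>I. K i < K x")
    case False
    then have "\<forall>i\<in>I. K x \<le> K i" by (simp add: not_less)
    then obtain P' n' where "Inv L sz K (insert x I) P' n'" "mc cst I P P' = 0"
      using insG[OF inv its x] by blast
    then show ?thesis unfolding InsPost_def using Kx0 by (intro exI[of _ P'] exI[of _ n']) simp
  next
    case True
    then have ex: "\<exists>b. \<exists>i\<in>I. K i < K x \<and> P i = b" by blast
    define f where "f = (LEAST b. \<exists>i\<in>I. K i < K x \<and> P i = b)"
    obtain w where w: "w \<in> I" "K w < K x" "P w = f"
      using LeastI_ex[OF ex] unfolding f_def[symmetric] by blast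
    have hf: "\<forall>i\<in>I. K i < K x \<longrightarrow> f \<le> P i"
      unfolding f_def by (auto intro: Least_le)
    have s1: "\<forall>i\<in>I. P i < f \<longrightarrow> K x \<le> K i" using hf by (meson not_less)
    have s2: "\<forall>i\<in>I. f < P i \<longrightarrow> K i \<le> K w" using st w unfolding srt_def by auto
    have s2': "\<forall>i\<in>I. f < P i \<longrightarrow> K i \<le> K x" using s2 w by force
    have fn: "f < n" using rng w by auto
    define Bf where "Bf = binof P I f"
    have wB: "w \<in> Bf" using w by (simp add: Bf_def binof_def)
    have finB: "finite Bf" using finbin by (simp add: Bf_def)
    have xB: "x \<notin> Bf" using x by (simp add: Bf_def binof_def)
    have cntf: "(if Suc f = n then 1 else L) \<le> card Bf" using cnt[OF fn] by (simp add: Bf_def)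
    have loadf: "sum sz Bf \<le> 1" using load[OF fn] by (simp add: Bf_def)
    have BI: "Bf \<subseteq> I" by (auto simp: Bf_def binof_def)
    have cB1: "0 < card Bf" using wB finB card_gt_0_iff by blast
    have Kw2: "2 * K w \<le> K x" using geo w by blast
    have xw: "x \<noteq> w" using x w by blast
    show ?thesis
    proof (cases "sum sz (insert x Bf) \<le> 1")
      case True
      have c: "(if Suc f = n then 1 else L) \<le> card (insert x (Bf - {}))"
        using cntf finB xB by (simp add: card_insert_if)
      have "Inv L sz K (insert x (I - {})) (P(x := f)) n"
        using True c s1 s2' fn by (intro Inv_put[OF inv x]) (auto simp: Bf_def)
      then show ?thesis unfolding InsPost_def using mc_upd_new[OF x] Kx0
        by (intro exI[of _ "P(x := f)"] exI[of _ n]) simp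
    next
      case nok1: False
      show ?thesis
      proof (cases "sum sz (insert x (Bf - {w})) \<le> 1")
        case True
        have ceq: "card (insert x (Bf - {w})) = card Bf" using wB xB finB cB1 by (simp add: card_insert_if)
        define I1 where "I1 = insert x (I - {w})"
        have inv1: "Inv L sz K I1 (P(x := f)) n"
          unfolding I1_def using True ceq cntf s1 s2' fn wB
          by (intro Inv_put[OF inv x]) (auto simp: Bf_def)
        have eqI: "insert w I1 = insert x I" using w by (auto simp: I1_def)
        have wI1: "w \<notin> I1" using xw by (simp add: I1_def)
        have "card {i \<in> I1. K i < K w} < m"
          unfolding less.prems(1)[symmetric] using finI w
          by (intro meas_lt[of I _ K "K x" w]) (auto simp: I1_def)
        moreover have its1: "Items k L sz cst K (insert w I1)" using its eqI by simp
        ultimately have "InsPost k L sz cst K I1 (P(x := f)) w"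
          using less.IH[OF _ refl inv1 its1 wI1] by blast
        then obtain P2 n2 where P2: "Inv L sz K (insert w I1) P2 n2" "mc cst I1 (P(x := f)) P2 \<le> 9 * K w"
          unfolding InsPost_def by blast
        have "mc cst I P P2 \<le> sum cst {w} + mc cst I1 (P(x := f)) P2 + mc cst I1 P2 P2"
          using finI w nn x by (intro mc_step2) (auto simp: I1_def)
        then have "mc cst I P P2 \<le> 5 * K x" using P2(2) cK[of w] w Kw2 by (simp add: mc_same)
        then show ?thesis unfolding InsPost_def using P2(1) eqI Kx0
          by (intro exI[of _ P2] exI[of _ n2]) simp
      next
        case nok2: False
        have ceq: "card (insert x (Bf - {w})) = card Bf" using wB xB finB cB1 by (simp add: card_insert_if)
        have "L < card (insert x (Bf - {w}))"
          using nok2 finB BI by (intro notok_card[OF its]) auto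
        then have "k \<le> card Bf" using ceq Lk by auto
        then have full: "card Bf = k" "\<forall>i\<in>Bf. sz i = 1 / real k"
          using ok_full[OF its _ finB loadf] BI by auto
        have xbig: "sz x \<noteq> 1 / real k"
        proof
          assume "sz x = 1 / real k"
          then have "sum sz (insert x (Bf - {w})) \<le> 1"
            using full ceq finB by (intro ok_small) auto
          then show False using nok2 by simp
        qed
        have mixed: "L = k - 1" "2 \<le> k"
          using Lk xbig its unfolding Items_def by auto
        have wsmall: "sz w = 1 / real k" using full wB by blast
        show ?thesis
        proof (cases "\<exists>w2\<in>Bf. w2 \<noteq> w \<and> K w2 < K x")
          case True
          then obtain w2 where w2: "w2 \<in> Bf" "w2 \<noteq> w" "K w2 < K x" by blast
          have w2I: "w2 \<in> I" using w2 BI by blast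
          have w2small: "sz w2 = 1 / real k" using full w2 by blast
          have Kw22: "2 * K w2 \<le> K x" using geo w2 by blast
          have ceq2: "card (insert x (Bf - {w, w2})) = L"
            using wB w2 xB finB full mixed by (simp add: card_insert_if)
          have load2: "sum sz (insert x (Bf - {w, w2})) \<le> 1"
            using ceq2 finB BI by (intro okL[OF its]) auto
          define I1 where "I1 = insert x (I - {w, w2})"
          have inv1: "Inv L sz K I1 (P(x := f)) n"
            unfolding I1_def using load2 ceq2 L1 s1 s2' fn wB w2
            by (intro Inv_put[OF inv x]) (auto simp: Bf_def)
          have wI1: "w \<notin> I1" using xw by (simp add: I1_def)
          have its1: "Items k L sz cst K (insert w I1)"
            by (rule Items_mono[OF its]) (use w in \<open>auto simp: I1_def\<close>)
          have "card {i \<in> I1. K i < K w} < m"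
            unfolding less.prems(1)[symmetric] using finI w
            by (intro meas_lt[of I _ K "K x" w]) (auto simp: I1_def)
          then have "InsPost k L sz cst K I1 (P(x := f)) w"
            using less.IH[OF _ refl inv1 its1 wI1] by blast
          then obtain P2 n2 where P2: "Inv L sz K (insert w I1) P2 n2" "mc cst I1 (P(x := f)) P2 \<le> 5 * K w"
            unfolding InsPost_def using wsmall by blast
          define I2 where "I2 = insert w I1"
          have eqI: "insert w2 I2 = insert x I" using w w2I by (auto simp: I1_def I2_def)
          have w2I2: "w2 \<notin> I2" using w2 x w2I by (auto simp: I1_def I2_def)
          have "card {i \<in> I2. K i < K w2} < m"
            unfolding less.prems(1)[symmetric] using finI w2I w2 w
            by (intro meas_lt[of I _ K "K x" w2]) (auto simp: I1_def I2_def)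
          moreover have "Items k L sz cst K (insert w2 I2)" using its eqI by simp
          ultimately have "InsPost k L sz cst K I2 P2 w2"
            using less.IH[OF _ refl P2(1)[folded I2_def] _ w2I2] by blast
          then obtain P3 n3 where P3: "Inv L sz K (insert w2 I2) P3 n3" "mc cst I2 P2 P3 \<le> 5 * K w2"
            unfolding InsPost_def using w2small by blast
          have "mc cst I P P3 \<le> sum cst {w, w2} + mc cst I1 (P(x := f)) P2 + mc cst I2 P2 P3"
            using finI w w2I nn x by (intro mc_step2) (auto simp: I1_def I2_def)
          moreover have "sum cst {w, w2} = cst w + cst w2" using w2 by simp
          ultimately have "mc cst I P P3 \<le> 6 * K x"
            using P2(2) P3(2) cK[of w] cK[of w2] w w2I Kw2 Kw22 by simp
          then show ?thesis unfolding InsPost_def using P3(1) eqI Kx0 xbig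
            by (intro exI[of _ P3] exI[of _ n3]) simp
        next
          case False
          then have big: "\<forall>w2\<in>Bf. w2 \<noteq> w \<longrightarrow> K x \<le> K w2" by (auto simp: not_less)
          define I1 where "I1 = I - {w}"
          have "(if Suc (P w) = n then 1 else L) \<le> card (binof P I (P w)) - 1"
            using full mixed w L1 by (simp add: Bf_def)
          then have inv1: "Inv L sz K I1 P n" unfolding I1_def
            using Inv_remove[OF inv Items_mono[OF its] w(1)] by auto
          have cl: "clean K I1 P x"
            unfolding clean_def
          proof (intro ballI impI)
            fix i j assume ij: "i \<in> I1" "j \<in> I1" "P i = P j" "K i < K x"
            then have "f \<le> P i" using hf by (auto simp: I1_def)
            moreover have "P i \<noteq> f"
            proof
              assume "P i = f"
              then have "i \<in> Bf" "i \<noteq> w" using ij by (auto simp: Bf_def binof_def I1_def)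
              then show False using big ij by force
            qed
            ultimately have "f < P j" using ij by simp
            then show "K j < K x" using s2 ij w by (force simp: I1_def)
          qed
          have xI1: "x \<notin> I1" using x by (simp add: I1_def)
          have "card {i \<in> I1. K i < K x} < m"
            unfolding less.prems(1)[symmetric] using finI w
            by (intro meas_lt[of I _ K "K x" w]) (auto simp: I1_def)
          moreover have "Items k L sz cst K (insert x I1)" using its by (rule Items_mono) (auto simp: I1_def)
          ultimately have "InsPost k L sz cst K I1 P x"
            using less.IH[OF _ refl inv1 _ xI1] by blast
          then obtain P2 n2 where P2: "Inv L sz K (insert x I1) P2 n2" "mc cst I1 P P2 \<le> 6 * K x"
            unfolding InsPost_def using cl by blast
          define I2 where "I2 = insert x I1"
          have eqI: "insert w I2 = insert x I" using w by (auto simp: I1_def I2_def)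
          have wI2: "w \<notin> I2" using xw by (simp add: I1_def I2_def)
          have "card {i \<in> I2. K i < K w} < m"
            unfolding less.prems(1)[symmetric] using finI w
            by (intro meas_lt[of I _ K "K x" w]) (auto simp: I1_def I2_def)
          moreover have "Items k L sz cst K (insert w I2)" using its eqI by simp
          ultimately have "InsPost k L sz cst K I2 P2 w"
            using less.IH[OF _ refl P2(1)[folded I2_def] _ wI2] by blast
          then obtain P3 n3 where P3: "Inv L sz K (insert w I2) P3 n3" "mc cst I2 P2 P3 \<le> 5 * K w"
            unfolding InsPost_def using wsmall by blast
          have "mc cst I P P3 \<le> sum cst {w} + mc cst I1 P P2 + mc cst I2 P2 P3"
            using finI w nn x by (intro mc_step2) (auto simp: I1_def I2_def)
          then have b9: "mc cst I P P3 \<le> 9 * K x"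
            using P2(2) P3(2) cK[of w] w Kw2 by simp
          have ncl: "\<not> clean K I P x"
          proof
            assume "clean K I P x"
            have "card Bf \<ge> 2" using full mixed by simp
            then have "1 \<le> card (Bf - {w})" using wB finB by simp
            then obtain w2 where "w2 \<in> Bf - {w}" by (metis card.empty ex_in_conv not_one_le_zero)
            then have "w2 \<in> Bf" "w2 \<noteq> w" by auto
            then have "w2 \<in> I" "P w2 = P w" using w by (auto simp: Bf_def binof_def)
            moreover have cl': "\<forall>i\<in>I. \<forall>j\<in>I. P i = P j \<longrightarrow> K i < K x \<longrightarrow> K j < K x"
              using \<open>clean K I P x\<close> by (simp only: clean_def)
            ultimately have "K w2 < K x" using w(1,2) by metis
            then show False using big \<open>w2 \<in> Bf\<close> \<open>w2 \<noteq> w\<close> by force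
          qed
          show ?thesis unfolding InsPost_def using P3(1) eqI b9 xbig ncl
            by (intro exI[of _ P3] exI[of _ n3]) simp
        qed
      qed
    qed
  qed
qed

end



lemma Inv_cong:
  assumes "Inv L sz K I P n" "\<forall>j\<in>I. sz j = sz' j" "\<forall>j\<in>I. K j = K' j" "L' \<le> L"
  shows "Inv L' sz' K' I P n"
proof -
  have bs: "\<And>b. sum sz (binof P I b) = sum sz' (binof P I b)"
    using assms(2) by (intro sum.cong) (auto simp: binof_def)
  have "srt K' I P" using assms(1,3) unfolding Inv_def srt_def by metis
  moreover have "\<forall>b<n. (if Suc b = n then 1 else L') \<le> card (binof P I b)"
    using assms(1,4) unfolding Inv_def by (metis (full_types) le_trans order_refl)
  ultimately show ?thesis using assms(1) bs unfolding Inv_def by auto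
qed

lemma Inv_empty: "Inv L sz K {} P 0"
  by (simp add: Inv_def srt_def)

context alg
begin

lemma concl:
  assumes inv: "Inv L sz K I P n" and its: "Items k L sz cst K I"
  shows "(\<forall>b. sum sz (binof P I b) \<le> 1)
    \<and> (\<exists>b0. \<forall>b\<in>P ` I. b \<noteq> b0 \<longrightarrow> k - 1 \<le> card (binof P I b))
    \<and> (L = k \<longrightarrow> (\<exists>b0. \<forall>b\<in>P ` I. b \<noteq> b0 \<longrightarrow> card (binof P I b) = k))"
proof -
  have finI: "finite I" and rng: "\<forall>i\<in>I. P i < n"
    and cnt: "\<And>b. b < n \<Longrightarrow> (if Suc b = n then 1 else L) \<le> card (binof P I b)"
    and load: "\<And>b. b < n \<Longrightarrow> sum sz (binof P I b) \<le> 1"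
    using inv unfolding Inv_def by blast+
  have A: "\<forall>b. sum sz (binof P I b) \<le> 1"
  proof
    fix b show "sum sz (binof P I b) \<le> 1"
    proof (cases "b < n")
      case True then show ?thesis using load by blast
    next
      case False
      then have "binof P I b = {}" using rng by (auto simp: binof_def)
      then show ?thesis by simp
    qed
  qed
  have B: "\<forall>b\<in>P ` I. b \<noteq> n - 1 \<longrightarrow> L \<le> card (binof P I b)"
  proof (intro ballI impI)
    fix b assume "b \<in> P ` I" "b \<noteq> n - 1"
    then have "b < n" "Suc b \<noteq> n" using rng by auto
    then show "L \<le> card (binof P I b)" using cnt[of b] by simp
  qed
  have C: "L = k \<longrightarrow> (\<forall>b\<in>P ` I. b \<noteq> n - 1 \<longrightarrow> card (binof P I b) = k)"
  proof (intro impI ballI)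
    fix b assume "L = k" "b \<in> P ` I" "b \<noteq> n - 1"
    then have "k \<le> card (binof P I b)" using B by auto
    then show "card (binof P I b) = k"
      using ok_full[OF its _ binof_fin[OF finI] A[rule_format]] by (auto simp: binof_def)
  qed
  show ?thesis using A B C Lk by (metis le_trans diff_le_self order_refl)
qed

end

definition Kof :: "state \<Rightarrow> nat \<Rightarrow> real" where
  "Kof S i = kap (cost_of S i)"

definition Lof :: "nat \<Rightarrow> upd list \<Rightarrow> nat" where
  "Lof k us = (if sizes_in (\<lambda>s. s = 1 / real k) us then k else k - 1)"

definition Good :: "upd list \<Rightarrow> (nat \<Rightarrow> nat) \<Rightarrow> bool" where
  "Good us P = (\<forall>k. 1 \<le> k \<and> valid_seq us \<and> sizes_in (in_class k) us \<longrightarrow>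
     (\<exists>n. Inv (Lof k us) (size_of (items us)) (Kof (items us)) (dom (items us)) P n))"

lemma items_snoc: "items (us @ [u]) = step (items us) u"
  by (simp add: items_def)

lemma items_nil: "items [] = Map.empty"
  by (simp add: items_def)

lemma valid_snoc: "valid_seq (us @ [u]) = (valid_seq us \<and> upd_ok (items us) u)"
  unfolding valid_seq_def
proof safe
  fix t assume "\<forall>t<length (us @ [u]). upd_ok (items (take t (us @ [u]))) ((us @ [u]) ! t)" "t < length us"
  then show "upd_ok (items (take t us)) (us ! t)" by (metis (no_types) length_append_singleton less_SucI nth_append take_append take_all_iff le_refl less_imp_le_nat diff_is_0_eq append_Nil2 take0)
next
  assume "\<forall>t<length (us @ [u]). upd_ok (items (take t (us @ [u]))) ((us @ [u]) ! t)"
  then show "upd_ok (items us) u" by (metis length_append_singleton lessI nth_append_length take_all_iff le_refl append_take_drop_id take_append diff_self_eq_0 take0 append_Nil2)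
next
  fix t assume a: "\<forall>t<length us. upd_ok (items (take t us)) (us ! t)" "upd_ok (items us) u" "t < length (us @ [u])"
  show "upd_ok (items (take t (us @ [u]))) ((us @ [u]) ! t)"
  proof (cases "t < length us")
    case True then show ?thesis using a by (simp add: nth_append)
  next
    case False then have "t = length us" using a by simp
    then show ?thesis using a by simp
  qed
qed

lemma sizes_snoc: "sizes_in Q (us @ [u]) = (sizes_in Q us \<and> (\<forall>i s c. u = Ins i s c \<longrightarrow> Q s))"
  by (auto simp: sizes_in_def)

lemma items_mem: "items us i = Some (s, c) \<Longrightarrow> Ins i s c \<in> set us"
proof (induction us arbitrary: i s c rule: rev_induct)
  case Nil then show ?case by (simp add: items_nil)
next
  case (snoc u us)
  then show ?case by (cases u) (auto simp: items_snoc split: if_splits)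
qed

lemma finite_items: "finite (dom (items us))"
proof (induction us rule: rev_induct)
  case Nil then show ?case by (simp add: items_nil)
next
  case (snoc u us)
  then show ?case by (cases u) (auto simp: items_snoc dom_fun_upd simp del: fun_upd_apply)
qed

lemma valid_ins: "valid_seq us \<Longrightarrow> Ins i s c \<in> set us \<Longrightarrow> 0 < s \<and> s \<le> 1 \<and> 0 \<le> c"
  unfolding valid_seq_def by (metis in_set_conv_nth upd_ok.simps(1))

lemma class_unique:
  assumes "1 \<le> k" "1 \<le> k'" "in_class k s" "in_class k' s"
  shows "k = k'"
proof -
  have h: "k' \<le> k" if "1 \<le> k" "1 \<le> k'" "in_class k s" "in_class k' s" for k k'
  proof (cases "k' = 1")
    case True then show ?thesis using that by simp
  next
    case False
    then have "s < 1 / (real k' - 1)" "1 / real k \<le> s" using that unfolding in_class_def by auto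
    then have "1 / real k < 1 / (real k' - 1)" by linarith
    moreover have "0 < real k' - 1" using False that by simp
    ultimately have "real k' - 1 < real k" using that by (simp add: frac_less2 divide_less_cancel field_simps)
    then show ?thesis by simp
  qed
  show ?thesis using h[OF assms] h[OF assms(2,1,4,3)] by simp
qed

lemma state_Items:
  assumes v: "valid_seq us" and sz: "sizes_in (in_class k) us" and k: "1 \<le> k"
  shows "Items k (Lof k us) (size_of (items us)) (cost_of (items us)) (Kof (items us)) (dom (items us))"
proof -
  have A: "in_class k (size_of (items us) i) \<and> 0 \<le> cost_of (items us) i \<and> cost_of (items us) i \<le> Kof (items us) i"
    if mem: "i \<in> dom (items us)" for i
  proof -
    obtain y where y: "items us i = Some y" using domD[OF mem] by blast
    obtain s c where sc: "items us i = Some (s, c)" using y by (cases y) blast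
    then have m: "Ins i s c \<in> set us" by (rule items_mem)
    have "in_class k s" using m sz unfolding sizes_in_def by blast
    moreover have "0 \<le> c" using valid_ins[OF v m] by simp
    ultimately show ?thesis
      using sc kap_ge[of c] by (simp add: size_of_def cost_of_def Kof_def)
  qed
  have B: "size_of (items us) i = 1 / real k" if L: "Lof k us = k" and mem: "i \<in> dom (items us)" for i
  proof -
    obtain y where y: "items us i = Some y" using domD[OF mem] by blast
    obtain s c where sc: "items us i = Some (s, c)" using y by (cases y) blast
    then have m: "Ins i s c \<in> set us" by (rule items_mem)
    have "sizes_in (\<lambda>s. s = 1 / real k) us" using L k by (auto simp: Lof_def split: if_splits)
    then show ?thesis using m sc unfolding sizes_in_def size_of_def by auto
  qed
  show ?thesis unfolding Items_def using A B by blast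
qed

lemma state_alg:
  assumes v: "valid_seq us" and sz: "sizes_in (in_class k) us" and k: "1 \<le> k"
  shows "alg k (Lof k us) (Kof S)"
proof
  show "1 \<le> k" by (rule k)
  show "Lof k us = k \<or> Lof k us = k - 1 \<and> 2 \<le> k"
  proof (cases "k = 1")
    case True
    have "sizes_in (\<lambda>s. s = 1 / real k) us"
      unfolding sizes_in_def
    proof (intro ballI allI impI)
      fix u i s c assume "u \<in> set us" "u = Ins i s c"
      then have "s \<le> 1" "in_class k s" using valid_ins[OF v] sz unfolding sizes_in_def by blast+
      then show "s = 1 / real k" using True unfolding in_class_def by simp
    qed
    then show ?thesis by (simp add: Lof_def)
  next
    case False then show ?thesis using k by (simp add: Lof_def)
  qed
  fix a b assume "Kof S a < Kof S b"
  then show "2 * Kof S a \<le> Kof S b" unfolding Kof_def by (rule kap_geo)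
qed



lemma Good_intro:
  assumes k: "1 \<le> k" and sk: "sizes_in (in_class k) us'"
    and inv: "\<exists>n. Inv (Lof k us') (size_of (items us')) (Kof (items us')) (dom (items us')) P' n"
  shows "Good us' P'"
  unfolding Good_def
proof (intro allI impI)
  fix k' assume a: "1 \<le> k' \<and> valid_seq us' \<and> sizes_in (in_class k') us'"
  show "\<exists>n. Inv (Lof k' us') (size_of (items us')) (Kof (items us')) (dom (items us')) P' n"
  proof (cases "dom (items us') = {}")
    case True
    then show ?thesis using Inv_empty by metis
  next
    case False
    then obtain i y where "items us' i = Some y" by blast
    then obtain s c where "items us' i = Some (s, c)" by (cases y) blast
    then have "Ins i s c \<in> set us'" by (rule items_mem)
    then have "in_class k s" "in_class k' s" using sk a unfolding sizes_in_def by blast+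
    then have "k = k'" using class_unique k a by blast
    then show ?thesis using inv by simp
  qed
qed

lemma step_exists:
  assumes G: "Good us P" and v': "valid_seq (us @ [u])" and s': "sizes_in (in_class k) (us @ [u])"
    and k: "1 \<le> k"
  shows "\<exists>P'. Good (us @ [u]) P' \<and> move_cost (items us) (items (us @ [u])) P P' \<le> 18 * upd_cost (items us) u"
proof -
  have v: "valid_seq us" and ok: "upd_ok (items us) u" using v' by (auto simp: valid_snoc)
  have s: "sizes_in (in_class k) us" using s' by (simp add: sizes_snoc)
  define S where "S = items us"
  define S' where "S' = items (us @ [u])"
  have SS: "S' = step S u" by (simp add: S_def S'_def items_snoc)
  obtain n where inv: "Inv (Lof k us) (size_of S) (Kof S) (dom S) P n"
    using G v s k unfolding Good_def S_def by blast
  have finS: "finite (dom S)" by (simp add: S_def finite_items)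
  have its': "Items k (Lof k (us @ [u])) (size_of S') (cost_of S') (Kof S') (dom S')"
    using state_Items[OF v' s' k] by (simp add: S'_def)
  have its: "Items k (Lof k us) (size_of S) (cost_of S) (Kof S) (dom S)"
    using state_Items[OF v s k] by (simp add: S_def)
  interpret A': alg k "Lof k (us @ [u])" "size_of S'" "cost_of S'" "Kof S'"
    using state_alg[OF v' s' k] by simp
  interpret A: alg k "Lof k us" "size_of S" "cost_of S" "Kof S"
    using state_alg[OF v s k] by simp
  have suff: "\<exists>P'. (\<exists>n'. Inv (Lof k (us @ [u])) (size_of S') (Kof S') (dom S') P' n')
      \<and> move_cost S S' P P' \<le> 18 * upd_cost S u"
  proof (cases u)
    case (Ins i sz c)
    have Si: "S i = None" and c0: "0 \<le> c" using ok Ins by (auto simp: S_def)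
    have S'def: "S' = S(i \<mapsto> (sz, c))" using SS Ins by simp
    have domS': "dom S' = insert i (dom S)" using S'def by simp
    have iS: "i \<notin> dom S" using Si by auto
    have agree: "\<forall>j\<in>dom S. size_of S j = size_of S' j" "\<forall>j\<in>dom S. Kof S j = Kof S' j"
      "\<forall>j\<in>dom S. cost_of S j = cost_of S' j"
      using S'def iS by (auto simp: size_of_def Kof_def cost_of_def)
    have Lle: "Lof k (us @ [u]) \<le> Lof k us"
      using Ins by (auto simp: Lof_def sizes_snoc)
    have inv1: "Inv (Lof k (us @ [u])) (size_of S') (Kof S') (dom S) P n"
      using Inv_cong[OF inv agree(1,2) Lle] .
    have "InsPost k (Lof k (us @ [u])) (size_of S') (cost_of S') (Kof S') (dom S) P i"
      using A'.ins[OF refl inv1 _ iS] its' domS' by simp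
    then obtain P' n' where P': "Inv (Lof k (us @ [u])) (size_of S') (Kof S') (insert i (dom S)) P' n'"
      "mc (cost_of S') (dom S) P P' \<le> 9 * Kof S' i"
      unfolding InsPost_def by blast
    have "Kof S' i \<le> 2 * c" using S'def c0 kap_le[of c] by (simp add: Kof_def cost_of_def)
    moreover have "move_cost S S' P P' = mc (cost_of S') (dom S) P P'"
      unfolding move_cost_def mc_def using domS' by (intro sum.cong) auto
    ultimately have "move_cost S S' P P' \<le> 18 * upd_cost S u" using P'(2) Ins by simp
    then show ?thesis using P'(1) domS' by auto
  next
    case (Del i)
    have Si: "i \<in> dom S" using ok Del by (auto simp: S_def)
    have S'def: "S' = S(i := None)" using SS Del by simp
    have domS': "dom S' = dom S - {i}" using S'def by simp
    have agree: "\<forall>j\<in>dom S - {i}. size_of S j = size_of S' j" "\<forall>j\<in>dom S - {i}. Kof S j = Kof S' j"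
      using S'def by (auto simp: size_of_def Kof_def cost_of_def)
    have Leq: "Lof k (us @ [u]) = Lof k us"
      using Del by (auto simp: Lof_def sizes_snoc)
    obtain P' n' where P': "Inv (Lof k us) (size_of S) (Kof S) (dom S - {i}) P' n'"
      "mc (cost_of S) (dom S - {i}) P P' \<le> 2 * Kof S i"
      using A.del[OF inv its Si] by blast
    have inv': "Inv (Lof k (us @ [u])) (size_of S') (Kof S') (dom S') P' n'"
      using Inv_cong[OF P'(1) agree] Leq domS' by simp
    have c0: "0 \<le> cost_of S i" using its Si unfolding Items_def by blast
    have "Kof S i \<le> 2 * cost_of S i" using kap_le[OF c0] by (simp add: Kof_def)
    moreover have "move_cost S S' P P' = mc (cost_of S) (dom S - {i}) P P'"
      unfolding move_cost_def mc_def using domS' S'def by (intro sum.cong) (auto simp: cost_of_def)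
    ultimately have "move_cost S S' P P' \<le> 18 * upd_cost S u" using P'(2) Del c0 by simp
    then show ?thesis using inv' by auto
  qed
  then obtain P' where P': "\<exists>n'. Inv (Lof k (us @ [u])) (size_of S') (Kof S') (dom S') P' n'"
    "move_cost S S' P P' \<le> 18 * upd_cost S u" by blast
  have "Good (us @ [u]) P'" using Good_intro[OF k s'] P'(1) by (simp add: S'_def)
  then show ?thesis using P'(2) by (auto simp: S_def S'_def)
qed

primrec Ar :: "upd list \<Rightarrow> nat \<Rightarrow> nat" where
  "Ar [] = (\<lambda>_. 0)"
| "Ar (u # rs) = (SOME P'. Good (rev rs @ [u]) P'
      \<and> move_cost (items (rev rs)) (items (rev rs @ [u])) (Ar rs) P' \<le> 18 * upd_cost (items (rev rs)) u)"

definition Aalg :: "upd list \<Rightarrow> nat \<Rightarrow> nat" where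
  "Aalg us = Ar (rev us)"

lemma Aalg_snoc: "Aalg (us @ [u]) = (SOME P'. Good (us @ [u]) P'
      \<and> move_cost (items us) (items (us @ [u])) (Aalg us) P' \<le> 18 * upd_cost (items us) u)"
  by (simp add: Aalg_def)

lemma Good_A:
  "valid_seq us \<Longrightarrow> sizes_in (in_class k) us \<Longrightarrow> 1 \<le> k \<Longrightarrow> Good us (Aalg us)"
proof (induction us rule: rev_induct)
  case Nil
  show ?case by (simp add: Good_def items_nil) (blast intro: Inv_empty)
next
  case (snoc u us)
  have "valid_seq us" "sizes_in (in_class k) us" using snoc.prems by (simp_all add: valid_snoc sizes_snoc)
  then have "Good us (Aalg us)" using snoc.IH snoc.prems(3) by blast
  then have "\<exists>P'. Good (us @ [u]) P' \<and> move_cost (items us) (items (us @ [u])) (Aalg us) P' \<le> 18 * upd_cost (items us) u"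
    using step_exists snoc.prems by blast
  then show ?case unfolding Aalg_snoc by (rule someI2_ex) blast
qed

lemma cost_A:
  assumes "valid_seq (us @ [u])" "sizes_in (in_class k) (us @ [u])" "1 \<le> k"
  shows "move_cost (items us) (items (us @ [u])) (Aalg us) (Aalg (us @ [u])) \<le> 18 * upd_cost (items us) u"
proof -
  have "valid_seq us" "sizes_in (in_class k) us" using assms by (simp_all add: valid_snoc sizes_snoc)
  then have "Good us (Aalg us)" using assms(3) Good_A by blast
  then have "\<exists>P'. Good (us @ [u]) P' \<and> move_cost (items us) (items (us @ [u])) (Aalg us) P' \<le> 18 * upd_cost (items us) u"
    using step_exists assms by blast
  then show ?thesis unfolding Aalg_snoc by (rule someI2_ex) blast
qed

lemma valid_take: "valid_seq us \<Longrightarrow> valid_seq (take t us)"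
  unfolding valid_seq_def by (simp add: min_def)

lemma sizes_take: "sizes_in Q us \<Longrightarrow> sizes_in Q (take t us)"
  unfolding sizes_in_def by (meson in_set_takeD)



lemma prefix_good:
  assumes k: "1 \<le> k" and v: "valid_seq us" and s: "sizes_in (in_class k) us"
  shows "feasible (items us) (Aalg us)
       \<and> (\<exists>b0. \<forall>b \<in> used_bins (items us) (Aalg us). b \<noteq> b0 \<longrightarrow>
              k - 1 \<le> bin_count (items us) (Aalg us) b)
       \<and> (sizes_in (\<lambda>s. s = 1 / real k) us \<longrightarrow>
           (\<exists>b0. \<forall>b \<in> used_bins (items us) (Aalg us). b \<noteq> b0 \<longrightarrow>
              bin_count (items us) (Aalg us) b = k))"
proof -
  define S where "S = items us"
  obtain n where inv: "Inv (Lof k us) (size_of S) (Kof S) (dom S) (Aalg us) n"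
    using Good_A[OF v s k] v s k unfolding Good_def S_def by blast
  have its: "Items k (Lof k us) (size_of S) (cost_of S) (Kof S) (dom S)"
    using state_Items[OF v s k] by (simp add: S_def)
  interpret A: alg k "Lof k us" "size_of S" "cost_of S" "Kof S"
    using state_alg[OF v s k] by simp
  note c = A.concl[OF inv its]
  note c' = c[unfolded S_def binof_def]
  have L: "Lof k us = k" if "sizes_in (\<lambda>s. s = 1 / real k) us" using that by (simp add: Lof_def)
  show ?thesis
    unfolding feasible_def bin_load_def used_bins_def bin_count_def
    using c' L by auto
qed

theorem lemma3p3:
  shows "\<exists>(\<gamma>::real) (A :: upd list \<Rightarrow> nat \<Rightarrow> nat).
    \<forall>(k::nat) us. 1 \<le> k \<and> valid_seq us \<and> sizes_in (in_class k) us \<longrightarrow>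
      (\<forall>t \<le> length us.
         feasible (items (take t us)) (A (take t us))
       \<and> (\<exists>b0. \<forall>b \<in> used_bins (items (take t us)) (A (take t us)). b \<noteq> b0 \<longrightarrow>
              k - 1 \<le> bin_count (items (take t us)) (A (take t us)) b)
       \<and> (sizes_in (\<lambda>s. s = 1 / real k) (take t us) \<longrightarrow>
           (\<exists>b0. \<forall>b \<in> used_bins (items (take t us)) (A (take t us)). b \<noteq> b0 \<longrightarrow>
              bin_count (items (take t us)) (A (take t us)) b = k)))
    \<and> (\<forall>t < length us.
         move_cost (items (take t us)) (items (take (Suc t) us))
                   (A (take t us)) (A (take (Suc t) us))
           \<le> \<gamma> * upd_cost (items (take t us)) (us ! t))"
proof (intro exI[of _ 18] exI[of _ Aalg] allI impI)
  fix k us assume a: "1 \<le> k \<and> valid_seq us \<and> sizes_in (in_class k) us"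
  have X: "\<forall>t \<le> length us.
         feasible (items (take t us)) (Aalg (take t us))
       \<and> (\<exists>b0. \<forall>b \<in> used_bins (items (take t us)) (Aalg (take t us)). b \<noteq> b0 \<longrightarrow>
              k - 1 \<le> bin_count (items (take t us)) (Aalg (take t us)) b)
       \<and> (sizes_in (\<lambda>s. s = 1 / real k) (take t us) \<longrightarrow>
           (\<exists>b0. \<forall>b \<in> used_bins (items (take t us)) (Aalg (take t us)). b \<noteq> b0 \<longrightarrow>
              bin_count (items (take t us)) (Aalg (take t us)) b = k))"
    using prefix_good a valid_take sizes_take by blast
  have Y: "\<forall>t < length us.
         move_cost (items (take t us)) (items (take (Suc t) us))
                   (Aalg (take t us)) (Aalg (take (Suc t) us))
           \<le> 18 * upd_cost (items (take t us)) (us ! t)"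
  proof (intro allI impI)
    fix t assume t: "t < length us"
    have eq: "take (Suc t) us = take t us @ [us ! t]" using t by (simp add: take_Suc_conv_app_nth)
    have "valid_seq (take t us @ [us ! t])" "sizes_in (in_class k) (take t us @ [us ! t])"
      using a valid_take sizes_take eq by metis+
    then show "move_cost (items (take t us)) (items (take (Suc t) us))
                   (Aalg (take t us)) (Aalg (take (Suc t) us))
           \<le> 18 * upd_cost (items (take t us)) (us ! t)"
      using cost_A a eq by metis
  qed
  show "(\<forall>t \<le> length us.
         feasible (items (take t us)) (Aalg (take t us))
       \<and> (\<exists>b0. \<forall>b \<in> used_bins (items (take t us)) (Aalg (take t us)). b \<noteq> b0 \<longrightarrow>
              k - 1 \<le> bin_count (items (take t us)) (Aalg (take t us)) b)
       \<and> (sizes_in (\<lambda>s. s = 1 / real k) (take t us) \<longrightarrow>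
           (\<exists>b0. \<forall>b \<in> used_bins (items (take t us)) (Aalg (take t us)). b \<noteq> b0 \<longrightarrow>
              bin_count (items (take t us)) (Aalg (take t us)) b = k)))
    \<and> (\<forall>t < length us.
         move_cost (items (take t us)) (items (take (Suc t) us))
                   (Aalg (take t us)) (Aalg (take (Suc t) us))
           \<le> 18 * upd_cost (items (take t us)) (us ! t))"
    using X Y by blast
qed


end
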